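(* Let $f:\mathbb{R}^d\to\mathbb{R}$ be convex and differentiable with $L$-Lipschitz gradient ($L>0$), let $h:\mathbb{R}^d\to\mathbb{R}\cup\{+\infty\}$ be proper, closed and convex, let $F=f+h$, and assume $F$ has bounded level sets and a minimizer $x^*$. (a) For every $x\in\mathbb{R}^d$, the value $\lambda=1/(3L)$ satisfies the linesearch condition $\mathrm{(LS)}(x,\lambda)$. (b) Let $x_0\in\mathbb{R}^d$ and define iteratively $x_{k+1}=x_k-\lambda_k G^{f}_{\lambda_k h}(x_k)$, where $\lambda_k=\max\{\lambda>0:\ \mathrm{(LS)}(x_k,\lambda)\text{ holds}\}$ (assumed to be attained). Then $\lambda_k\ge 1/(3L)$ for all $k$, and there is a constant $D$ depending only on $x_0$, $x^*$ and $L$ such that $F(x_k)-F(x^* )\le D/k$ for all $k\ge1$.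
   Context: $\mathbb{R}^d$ carries the standard inner product $\langle\cdot,\cdot\rangle$ and Euclidean norm $\|\cdot\|$. For $\lambda>0$ the proximal operator is $\mathrm{prox}_{\lambda h}(w)=\arg\min_{u\in\mathbb{R}^d}\big\{\lambda h(u)+\tfrac12\|u-w\|^2\big\}$. The gradient mapping is $G^{f}_{\lambda h}(x)=\frac{1}{\lambda}\Big(x-\mathrm{prox}_{\lambda h}\big(x-\lambda\nabla f(x)\big)\Big)$. For $x\in\mathbb{R}^d$ and $\lambda>0$, the linesearch condition $\mathrm{(LS)}(x,\lambda)$ is: with $G=G^{f}_{\lambda h}(x)$, $f(x-2\lambda G)\le f(x-\lambda G)-\lambda\langle G,\nabla f(x)\rangle+\tfrac{\lambda}{2}\|G\|^2$. *)

theory Defs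
  imports "HOL-Analysis.Analysis"
begin

definition proper_fun :: "('a \<Rightarrow> ereal) \<Rightarrow> bool" where
  "proper_fun h \<longleftrightarrow> (\<exists>x. h x < \<infinity>) \<and> (\<forall>x. h x \<noteq> -\<infinity>)"

definition epigraph :: "('a \<Rightarrow> ereal) \<Rightarrow> ('a \<times> real) set" where
  "epigraph h = {(x, t). h x \<le> ereal t}"

definition closed_fun :: "('a::topological_space \<Rightarrow> ereal) \<Rightarrow> bool" where
  "closed_fun h \<longleftrightarrow> closed (epigraph h)"

definition convex_fun :: "('a::real_vector \<Rightarrow> ereal) \<Rightarrow> bool" where
  "convex_fun h \<longleftrightarrow> convex (epigraph h)"

text \<open>prox_{lam h}(w) = argmin_u { lam h(u) + 1/2 |u - w|^2 }
  (unique for proper closed convex h and lam > 0).\<close>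

definition prox :: "real \<Rightarrow> ('a::real_normed_vector \<Rightarrow> ereal) \<Rightarrow> 'a \<Rightarrow> 'a" where
  "prox lam h w = (SOME u. \<forall>v. ereal lam * h u + ereal ((norm (u - w))\<^sup>2 / 2)
                               \<le> ereal lam * h v + ereal ((norm (v - w))\<^sup>2 / 2))"

definition grad_map :: "('a::real_normed_vector \<Rightarrow> 'a) \<Rightarrow> real \<Rightarrow> ('a \<Rightarrow> ereal) \<Rightarrow> 'a \<Rightarrow> 'a" where
  "grad_map gradf lam h x = (1 / lam) *\<^sub>R (x - prox lam h (x - lam *\<^sub>R gradf x))"

definition LS :: "('a::real_inner \<Rightarrow> real) \<Rightarrow> ('a \<Rightarrow> 'a) \<Rightarrow> ('a \<Rightarrow> ereal) \<Rightarrow> 'a \<Rightarrow> real \<Rightarrow> bool" where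
  "LS f gradf h x lam \<longleftrightarrow>
     (let G = grad_map gradf lam h x in
       f (x - (2 * lam) *\<^sub>R G) \<le> f (x - lam *\<^sub>R G) - lam * inner G (gradf x) + lam / 2 * (norm G)\<^sup>2)"

definition setting :: "('a::euclidean_space \<Rightarrow> real) \<Rightarrow> ('a \<Rightarrow> 'a) \<Rightarrow> ('a \<Rightarrow> ereal) \<Rightarrow> real \<Rightarrow> 'a \<Rightarrow> bool" where
  "setting f gradf h L xs \<longleftrightarrow>
     convex_on UNIV f \<and>
     (\<forall>x. (f has_derivative (\<lambda>v. inner (gradf x) v)) (at x)) \<and>
     (\<forall>x y. norm (gradf x - gradf y) \<le> L * norm (x - y)) \<and>
     proper_fun h \<and> closed_fun h \<and> convex_fun h \<and>
     (\<forall>c::real. bounded {x. ereal (f x) + h x \<le> ereal c}) \<and>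
     (\<forall>x. ereal (f xs) + h xs \<le> ereal (f x) + h x)"

definition ls_iterates :: "('a::euclidean_space \<Rightarrow> real) \<Rightarrow> ('a \<Rightarrow> 'a) \<Rightarrow> ('a \<Rightarrow> ereal) \<Rightarrow> 'a
     \<Rightarrow> (nat \<Rightarrow> 'a) \<Rightarrow> (nat \<Rightarrow> real) \<Rightarrow> bool" where
  "ls_iterates f gradf h x0 x lam \<longleftrightarrow>
     x 0 = x0 \<and>
     (\<forall>k. lam k > 0 \<and> LS f gradf h (x k) (lam k) \<and>
          (\<forall>\<mu>>0. LS f gradf h (x k) \<mu> \<longrightarrow> \<mu> \<le> lam k)) \<and>
     (\<forall>k. x (Suc k) = x k - lam k *\<^sub>R grad_map gradf (lam k) h (x k))"

end

theory Submission
  imports Defs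
begin


lemma line_deriv:
  fixes f :: "'a::real_inner \<Rightarrow> real"
  assumes "\<And>x. (f has_derivative (\<lambda>v. inner (g x) v)) (at x)"
  shows "((\<lambda>t. f (y + t *\<^sub>R v)) has_real_derivative inner (g (y + t *\<^sub>R v)) v) (at t)"
proof -
  have d1: "((\<lambda>t. y + t *\<^sub>R v) has_derivative (\<lambda>h. h *\<^sub>R v)) (at t)"
    by (auto intro!: derivative_eq_intros)
  have "((\<lambda>t. f (y + t *\<^sub>R v)) has_derivative (\<lambda>h. inner (g (y + t *\<^sub>R v)) (h *\<^sub>R v))) (at t)"
    using has_derivative_compose[OF d1 assms] .
  moreover have "(\<lambda>h. inner (g (y + t *\<^sub>R v)) (h *\<^sub>R v)) = (*) (inner (g (y + t *\<^sub>R v)) v)"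
    by (auto simp: fun_eq_iff)
  ultimately show ?thesis unfolding has_field_derivative_def by simp
qed

lemma descent:
  fixes f :: "'a::real_inner \<Rightarrow> real"
  assumes d: "\<And>x. (f has_derivative (\<lambda>v. inner (g x) v)) (at x)"
    and lip: "\<And>x y. norm (g x - g y) \<le> L * norm (x - y)"
  shows "f (y + v) \<le> f y + inner (g y) v + L / 2 * (norm v)\<^sup>2"
proof -
  define \<phi> where "\<phi> t = f (y + t *\<^sub>R v) - t * inner (g y) v - L * t\<^sup>2 / 2 * (norm v)\<^sup>2" for t
  have "\<phi> 0 \<ge> \<phi> 1"
  proof (rule DERIV_nonpos_imp_nonincreasing[where f=\<phi>])
    fix t :: real assume t: "0 \<le> t" "t \<le> 1"
    have D: "(\<phi> has_real_derivative inner (g (y + t *\<^sub>R v)) v - inner (g y) v - L * t * (norm v)\<^sup>2) (at t)"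
      unfolding \<phi>_def
      by (intro DERIV_diff line_deriv[OF d]) (auto intro!: derivative_eq_intros)
    have "inner (g (y + t *\<^sub>R v)) v - inner (g y) v = inner (g (y + t *\<^sub>R v) - g y) v"
      by (simp add: inner_diff_left)
    also have "\<dots> \<le> norm (g (y + t *\<^sub>R v) - g y) * norm v" by (rule norm_cauchy_schwarz)
    also have "\<dots> \<le> L * norm (t *\<^sub>R v) * norm v"
      using lip[of "y + t *\<^sub>R v" y] by (intro mult_right_mono) auto
    also have "\<dots> = L * t * (norm v)\<^sup>2" using t by (simp add: power2_eq_square)
    finally have "inner (g (y + t *\<^sub>R v)) v - inner (g y) v - L * t * (norm v)\<^sup>2 \<le> 0" by simp
    then show "\<exists>y. (\<phi> has_real_derivative y) (at t) \<and> y \<le> 0" using D by (intro exI[of _ "inner (g (y + t *\<^sub>R v)) v - inner (g y) v - L * t * (norm v)\<^sup>2"]) auto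
  qed simp
  then show ?thesis unfolding \<phi>_def by simp
qed

lemma part_a:
  fixes f :: "'a::real_inner \<Rightarrow> real"
  assumes d: "\<And>x. (f has_derivative (\<lambda>v. inner (g x) v)) (at x)"
    and lip: "\<And>x y. norm (g x - g y) \<le> L * norm (x - y)" and L: "L > 0"
  shows "LS f g h x (1 / (3 * L))"
proof -
  define lam where "lam = 1 / (3 * L)"
  define G where "G = grad_map g lam h x"
  define y where "y = x - lam *\<^sub>R G"
  have lam: "lam > 0" using L by (simp add: lam_def)
  have e1: "x - (2 * lam) *\<^sub>R G = y + (- (lam *\<^sub>R G))"
    by (simp add: y_def algebra_simps flip: scaleR_add_left)
  have "f (x - (2 * lam) *\<^sub>R G) \<le> f y + inner (g y) (- (lam *\<^sub>R G)) + L / 2 * (norm (lam *\<^sub>R G))\<^sup>2"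
    unfolding e1 using descent[OF d lip, of y "- (lam *\<^sub>R G)"] by simp
  moreover have "inner (g y) (- (lam *\<^sub>R G)) = - lam * inner G (g x) + lam * inner (g x - g y) G"
    by (simp add: inner_diff_left inner_commute algebra_simps)
  moreover have "lam * inner (g x - g y) G \<le> lam * (L * lam * (norm G)\<^sup>2)"
  proof (rule mult_left_mono[OF _ less_imp_le[OF lam]])
    have "inner (g x - g y) G \<le> norm (g x - g y) * norm G" by (rule norm_cauchy_schwarz)
    also have "\<dots> \<le> L * norm (x - y) * norm G" using lip[of x y] by (intro mult_right_mono) auto
    also have "\<dots> = L * lam * (norm G)\<^sup>2" using lam by (simp add: y_def power2_eq_square)
    finally show "inner (g x - g y) G \<le> L * lam * (norm G)\<^sup>2" .
  qed
  ultimately have "f (x - (2 * lam) *\<^sub>R G) \<le> f y - lam * inner G (g x) + (3/2) * L * lam\<^sup>2 * (norm G)\<^sup>2"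
    using lam by (simp add: power2_eq_square algebra_simps inner_commute)
  moreover have "(3/2) * L * lam\<^sup>2 = lam / 2" using L by (simp add: lam_def power2_eq_square)
  ultimately show ?thesis unfolding LS_def Let_def lam_def[symmetric] G_def[symmetric] y_def[symmetric]
    by (metis (no_types, lifting) mult.assoc times_divide_eq_right)
qed

lemma grad_ineq:
  fixes f :: "'a::real_inner \<Rightarrow> real"
  assumes c: "convex_on UNIV f" and d: "\<And>x. (f has_derivative (\<lambda>v. inner (g x) v)) (at x)"
  shows "f u \<ge> f x + inner (g x) (u - x)"
proof -
  define \<phi> where "\<phi> t = f (x + t *\<^sub>R (u - x))" for t
  have cv: "convex_on UNIV \<phi>"
  proof (rule convex_onI)
    fix t a b :: real assume t: "0 < t" "t < 1"
    have "x + ((1 - t) *\<^sub>R a + t *\<^sub>R b) *\<^sub>R (u - x) = (1 - t) *\<^sub>R (x + a *\<^sub>R (u - x)) + t *\<^sub>R (x + b *\<^sub>R (u - x))"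
      by (simp add: algebra_simps)
    then show "\<phi> ((1 - t) *\<^sub>R a + t *\<^sub>R b) \<le> (1 - t) * \<phi> a + t * \<phi> b"
      unfolding \<phi>_def using convex_onD[OF c, of t] t by simp
  qed simp
  have D: "(\<phi> has_field_derivative inner (g x) (u - x)) (at 0 within UNIV)"
    unfolding \<phi>_def using line_deriv[OF d, of x "u - x" 0] by simp
  have "\<phi> 1 - \<phi> 0 \<ge> inner (g x) (u - x) * (1 - 0)"
    by (rule convex_on_imp_above_tangent[OF cv _ _ _ D]) auto
  then show ?thesis unfolding \<phi>_def by simp
qed



lemma proper_finite:
  assumes "proper_fun h" "h u < \<infinity>"
  shows "h u = ereal (real_of_ereal (h u))"
  using assms unfolding proper_fun_def by (cases "h u") auto

lemma affine_minorant:
  fixes h :: "'a::euclidean_space \<Rightarrow> ereal"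
  assumes pr: "proper_fun h" and cl: "closed_fun h" and cv: "convex_fun h"
  shows "\<exists>v c. \<forall>u. ereal (inner v u + c) \<le> h u"
proof -
  obtain a where a: "h a < \<infinity>" using pr unfolding proper_fun_def by auto
  define ha where "ha = real_of_ereal (h a)"
  have ha: "h a = ereal ha" using proper_finite[OF pr a] ha_def by simp
  have "(a, ha - 1) \<notin> epigraph h" using ha by (simp add: epigraph_def)
  then obtain w b where wb: "inner w (a, ha - 1) < b" "\<forall>x\<in>epigraph h. inner w x > b"
    using separating_hyperplane_closed_point[of "epigraph h" "(a, ha - 1)"] cl cv
    unfolding closed_fun_def convex_fun_def by blast
  obtain p s where w: "w = (p, s)" by (cases w)
  have "(a, ha) \<in> epigraph h" using ha by (simp add: epigraph_def)
  then have "inner p a + s * ha > b" using wb(2) w by auto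
  moreover have "inner p a + s * (ha - 1) < b" using wb(1) w by simp
  ultimately have s: "s > 0" by (simp add: algebra_simps)
  have "ereal (inner (- (1/s) *\<^sub>R p) u + b / s) \<le> h u" for u
  proof (cases "h u")
    case (real r)
    then have "(u, r) \<in> epigraph h" by (simp add: epigraph_def)
    then have "inner p u + s * r > b" using wb(2) w by auto
    then have "b / s - inner p u / s < r" using s by (simp add: field_simps)
    then show ?thesis using real by (simp add: algebra_simps)
  next
    case PInf then show ?thesis by simp
  next
    case MInf then show ?thesis using pr unfolding proper_fun_def by auto
  qed
  then show ?thesis by blast
qed

lemma closed_sublevel:
  fixes h :: "'a::euclidean_space \<Rightarrow> ereal"
  assumes cl: "closed_fun h" and lam: "lam > 0"
  shows "closed {u. ereal lam * h u + ereal ((norm (u - w))\<^sup>2 / 2) \<le> ereal r}"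
proof -
  have eq: "{u. ereal lam * h u + ereal ((norm (u - w))\<^sup>2 / 2) \<le> ereal r}
      = (\<lambda>u. (u, (r - (norm (u - w))\<^sup>2 / 2) / lam)) -` epigraph h"
  proof (intro set_eqI iffI)
    fix u assume "u \<in> {u. ereal lam * h u + ereal ((norm (u - w))\<^sup>2 / 2) \<le> ereal r}"
    then show "u \<in> (\<lambda>u. (u, (r - (norm (u - w))\<^sup>2 / 2) / lam)) -` epigraph h"
      using lam by (cases "h u") (auto simp: epigraph_def field_simps)
  next
    fix u assume "u \<in> (\<lambda>u. (u, (r - (norm (u - w))\<^sup>2 / 2) / lam)) -` epigraph h"
    then show "u \<in> {u. ereal lam * h u + ereal ((norm (u - w))\<^sup>2 / 2) \<le> ereal r}"
      using lam by (cases "h u") (auto simp: epigraph_def field_simps)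
  qed
  show ?thesis unfolding eq
    by (rule continuous_closed_vimage) (use cl lam in \<open>auto simp: closed_fun_def intro!: continuous_intros\<close>)
qed

lemma quad_bound:
  fixes s A B :: real
  assumes "s\<^sup>2 / 2 \<le> A + B * s" "B \<ge> 0" "s \<ge> 0"
  shows "s \<le> 2 * B + 2 * \<bar>A\<bar> + 1"
proof (rule ccontr)
  assume "\<not> ?thesis"
  then have s: "s > 2 * B + 2 * \<bar>A\<bar> + 1" by simp
  then have "s * s / 2 > s * (2 * B + 2 * \<bar>A\<bar> + 1) / 2" using assms
    by (intro divide_strict_right_mono mult_strict_left_mono) auto
  moreover have "s * (2 * B + 2 * \<bar>A\<bar> + 1) / 2 \<ge> A + B * s"
  proof -
    have "s \<ge> 1" using s assms by linarith
    then have "s * \<bar>A\<bar> \<ge> 1 * \<bar>A\<bar>" by (intro mult_right_mono) auto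
    then show ?thesis using s assms by (simp add: algebra_simps)
  qed
  ultimately show False using assms by (simp add: power2_eq_square)
qed

lemma le_eps01:
  fixes P m :: real
  assumes "\<And>t. 0 < t \<Longrightarrow> t \<le> 1 \<Longrightarrow> P \<le> m + t"
  shows "P \<le> m"
proof (rule field_le_epsilon)
  fix e :: real assume e: "0 < e"
  have "P \<le> m + min e 1" using assms[of "min e 1"] e by simp
  then show "P \<le> m + e" by linarith
qed

lemma prox_exists:
  fixes h :: "'a::euclidean_space \<Rightarrow> ereal"
  assumes pr: "proper_fun h" and cl: "closed_fun h" and cv: "convex_fun h" and lam: "lam > 0"
  shows "\<exists>p. \<forall>v. ereal lam * h p + ereal ((norm (p - w))\<^sup>2 / 2)
                 \<le> ereal lam * h v + ereal ((norm (v - w))\<^sup>2 / 2)"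
proof -
  define \<Phi> where "\<Phi> u = ereal lam * h u + ereal ((norm (u - w))\<^sup>2 / 2)" for u
  obtain v0 c where vc: "\<And>u. ereal (inner v0 u + c) \<le> h u"
    using affine_minorant[OF pr cl cv] by blast
  define q where "q u = lam * (inner v0 u + c) + (norm (u - w))\<^sup>2 / 2" for u
  have lb: "ereal (q u) \<le> \<Phi> u" for u
  proof -
    have "ereal lam * ereal (inner v0 u + c) \<le> ereal lam * h u"
      by (rule ereal_mult_left_mono[OF vc]) (use lam in simp)
    then have "ereal lam * ereal (inner v0 u + c) + ereal ((norm (u - w))\<^sup>2 / 2) \<le> \<Phi> u"
      unfolding \<Phi>_def by (rule add_right_mono)
    then show ?thesis by (simp add: q_def)
  qed
  define B where "B = lam * norm v0"
  have B0: "B \<ge> 0" using lam by (simp add: B_def)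
  have qge: "q u \<ge> lam * c + lam * inner v0 w - B * norm (u - w) + (norm (u - w))\<^sup>2 / 2" for u
  proof -
    have "inner v0 (u - w) \<ge> - (norm v0 * norm (u - w))"
      using norm_cauchy_schwarz[of "-v0" "u - w"] by simp
    then have "lam * inner v0 (u - w) \<ge> lam * (- (norm v0 * norm (u - w)))"
      using lam by (intro mult_left_mono) auto
    then show ?thesis by (simp add: q_def B_def inner_diff_right algebra_simps)
  qed
  define qlow where "qlow = lam * c + lam * inner v0 w - B\<^sup>2 / 2"
  have qlow: "q u \<ge> qlow" for u
  proof -
    have "(norm (u - w) - B)\<^sup>2 \<ge> 0" by simp
    then have "- B * norm (u - w) + (norm (u - w))\<^sup>2 / 2 \<ge> - B\<^sup>2 / 2"
      by (simp add: power2_eq_square algebra_simps)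
    then show ?thesis using qge[of u] by (simp add: qlow_def)
  qed
  obtain a where a: "h a < \<infinity>" using pr unfolding proper_fun_def by auto
  define m where "m = (INF u. \<Phi> u)"
  have "m \<le> \<Phi> a" unfolding m_def by (rule INF_lower) simp
  moreover have "\<Phi> a < \<infinity>"
  proof -
    obtain x where "h a = ereal x" using proper_finite[OF pr a] by blast
    then show ?thesis unfolding \<Phi>_def by simp
  qed
  ultimately have mtop: "m < \<infinity>" by (rule le_less_trans)
  have mbot: "ereal qlow \<le> m" unfolding m_def
  proof (rule INF_greatest)
    fix u
    have "ereal qlow \<le> ereal (q u)" using qlow[of u] by simp
    then show "ereal qlow \<le> \<Phi> u" using lb[of u] by (rule order_trans)
  qed
  define mr where "mr = real_of_ereal m"
  have m: "m = ereal mr" using mtop mbot unfolding mr_def by (cases m) auto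
  define T where "T t = {u. \<Phi> u \<le> ereal (mr + t)}" for t
  have Tne: "T t \<noteq> {}" if "t > 0" for t
  proof -
    have "m < ereal (mr + t)" using m that by simp
    then obtain u where "\<Phi> u < ereal (mr + t)" unfolding m_def INF_less_iff by auto
    then show ?thesis unfolding T_def by (auto intro: less_imp_le)
  qed
  have Tcl: "closed (T t)" for t
    unfolding T_def \<Phi>_def by (rule closed_sublevel[OF cl lam])
  have Tmono: "T s \<subseteq> T t" if "s \<le> t" for s t
  proof
    fix u assume "u \<in> T s"
    then have "\<Phi> u \<le> ereal (mr + s)" unfolding T_def by simp
    also have "\<dots> \<le> ereal (mr + t)" using that by simp
    finally show "u \<in> T t" unfolding T_def by simp
  qed
  define A where "A = mr + 1 - lam * c - lam * inner v0 w"
  have Tb: "T 1 \<subseteq> cball w (2 * B + 2 * \<bar>A\<bar> + 1)"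
  proof
    fix u assume "u \<in> T 1"
    then have "\<Phi> u \<le> ereal (mr + 1)" unfolding T_def by simp
    then have "ereal (q u) \<le> ereal (mr + 1)" using lb[of u] by (meson order_trans)
    then have "q u \<le> mr + 1" by simp
    then have "(norm (u - w))\<^sup>2 / 2 \<le> A + B * norm (u - w)"
      using qge[of u] unfolding A_def q_def by (simp add: algebra_simps)
    from quad_bound[OF this B0] show "u \<in> cball w (2 * B + 2 * \<bar>A\<bar> + 1)"
      by (simp add: dist_norm norm_minus_commute)
  qed
  have cpt: "compact (T 1)"
    unfolding compact_eq_bounded_closed using Tcl bounded_subset[OF bounded_cball Tb] by simp
  have "T 1 \<inter> \<Inter> (T ` {0<..1}) \<noteq> {}"
  proof (rule compact_imp_fip[OF cpt])
    fix S assume "S \<in> T ` {0<..1}" then show "closed S" using Tcl by auto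
  next
    fix F' assume F': "finite F'" "F' \<subseteq> T ` {0<..1}"
    then obtain I where I: "I \<subseteq> {0<..1}" "finite I" "F' = T ` I"
      by (meson finite_subset_image)
    show "T 1 \<inter> \<Inter> F' \<noteq> {}"
    proof (cases "I = {}")
      case True then show ?thesis using I Tne[of 1] by auto
    next
      case False
      define t0 where "t0 = Min I"
      have t0: "t0 \<in> I" unfolding t0_def using False I by simp
      have "T t0 \<subseteq> T 1" using t0 I(1) by (intro Tmono) auto
      moreover have "T t0 \<subseteq> T t" if "t \<in> I" for t
        using Min_le[OF I(2) that] unfolding t0_def[symmetric] by (rule Tmono)
      ultimately have "T t0 \<subseteq> T 1 \<inter> \<Inter> F'" unfolding I(3) by blast
      moreover have "T t0 \<noteq> {}" using Tne t0 I by auto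
      ultimately show ?thesis by blast
    qed
  qed
  then obtain p where p1: "p \<in> T 1" and p2: "\<forall>t\<in>{0<..1}. p \<in> T t" by blast
  have p: "p \<in> T 1" "\<And>t. 0 < t \<Longrightarrow> t \<le> 1 \<Longrightarrow> p \<in> T t" using p1 p2 by auto
  have "m \<le> \<Phi> p" unfolding m_def by (rule INF_lower) simp
  then have "\<Phi> p \<ge> ereal mr" using m by simp
  moreover have "\<Phi> p \<le> ereal (mr + 1)" using p(1) unfolding T_def by auto
  ultimately obtain P where P: "\<Phi> p = ereal P" by (cases "\<Phi> p") auto
  have "P \<le> mr"
    by (rule le_eps01) (use p(2) P in \<open>auto simp: T_def\<close>)
  have "\<Phi> p \<le> \<Phi> v" for v
  proof -
    have "\<Phi> p \<le> m" using P m \<open>P \<le> mr\<close> by simp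
    also have "m \<le> \<Phi> v" unfolding m_def by (rule INF_lower) simp
    finally show ?thesis .
  qed
  then show ?thesis unfolding \<Phi>_def by blast
qed



lemma le_epsC:
  fixes P m C :: real
  assumes "\<And>t. 0 < t \<Longrightarrow> t \<le> 1 \<Longrightarrow> P \<le> m + t * C" and C: "C \<ge> 0"
  shows "P \<le> m"
proof (rule field_le_epsilon)
  fix e :: real assume e: "0 < e"
  define t where "t = min 1 (e / (C + 1))"
  have t: "0 < t" "t \<le> 1" using e C by (auto simp: t_def)
  have "t * C \<le> (e / (C + 1)) * C" using C t_def by (intro mult_right_mono) auto
  also have "\<dots> \<le> e" using e C by (simp add: field_simps)
  finally show "P \<le> m + e" using assms(1)[OF t] by linarith
qed

lemma norm_add_sq:
  fixes a b :: "'a::real_inner"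
  shows "(norm (a + t *\<^sub>R b))\<^sup>2 = (norm a)\<^sup>2 + 2 * t * inner a b + t\<^sup>2 * (norm b)\<^sup>2"
  unfolding power2_norm_eq_inner
  by (simp add: inner_add_left inner_add_right inner_commute algebra_simps power2_eq_square)

lemma prox_min:
  fixes h :: "'a::euclidean_space \<Rightarrow> ereal"
  assumes pr: "proper_fun h" and cl: "closed_fun h" and cv: "convex_fun h" and lam: "lam > 0"
  shows "ereal lam * h (prox lam h w) + ereal ((norm (prox lam h w - w))\<^sup>2 / 2)
                 \<le> ereal lam * h v + ereal ((norm (v - w))\<^sup>2 / 2)"
  using someI_ex[OF prox_exists[OF pr cl cv lam, of w]] unfolding prox_def by blast

lemma prox_opt:
  fixes h :: "'a::euclidean_space \<Rightarrow> ereal"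
  assumes pr: "proper_fun h" and cl: "closed_fun h" and cv: "convex_fun h" and lam: "lam > 0"
    and p: "p = prox lam h w"
  shows "\<exists>hp. h p = ereal hp \<and> (\<forall>u z. h u = ereal z \<longrightarrow> lam * hp \<le> lam * z + inner (p - w) (u - p))"
proof -
  have min: "ereal lam * h p + ereal ((norm (p - w))\<^sup>2 / 2) \<le> ereal lam * h v + ereal ((norm (v - w))\<^sup>2 / 2)" for v
    using prox_min[OF pr cl cv lam] p by blast
  obtain a where a: "h a < \<infinity>" using pr unfolding proper_fun_def by auto
  obtain za where za: "h a = ereal za" using proper_finite[OF pr a] by blast
  have "h p < \<infinity>"
  proof (rule ccontr)
    assume "\<not> h p < \<infinity>"
    then have "h p = \<infinity>" by simp
    then show False using min[of a] za lam by simp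
  qed
  then obtain hp where hp: "h p = ereal hp" using proper_finite[OF pr] by blast
  have "lam * hp \<le> lam * z + inner (p - w) (u - p)" if hu: "h u = ereal z" for u z
  proof -
    define C where "C = (norm (u - p))\<^sup>2 / 2"
    have key: "lam * hp \<le> lam * z + inner (p - w) (u - p) + t * C" if t: "0 < t" "t \<le> 1" for t
    proof -
      define y where "y = (1 - t) *\<^sub>R p + t *\<^sub>R u"
      have "(p, hp) \<in> epigraph h" "(u, z) \<in> epigraph h" using hp hu by (auto simp: epigraph_def)
      from convexD[OF cv[unfolded convex_fun_def] this, of "1 - t" t] t
      have "(y, (1 - t) * hp + t * z) \<in> epigraph h" by (simp add: y_def)
      then have hy: "h y \<le> ereal ((1 - t) * hp + t * z)" by (simp add: epigraph_def)
      have "ereal lam * h y \<le> ereal lam * ereal ((1 - t) * hp + t * z)"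
        by (rule ereal_mult_left_mono[OF hy]) (use lam in simp)
      then have "ereal lam * h y + ereal ((norm (y - w))\<^sup>2 / 2)
          \<le> ereal (lam * ((1 - t) * hp + t * z) + (norm (y - w))\<^sup>2 / 2)"
        by (metis add_right_mono plus_ereal.simps(1) times_ereal.simps(1))
      moreover have "ereal (lam * hp + (norm (p - w))\<^sup>2 / 2) \<le> ereal lam * h y + ereal ((norm (y - w))\<^sup>2 / 2)"
        using min[of y] hp by simp
      ultimately have "ereal (lam * hp + (norm (p - w))\<^sup>2 / 2) \<le> ereal (lam * ((1 - t) * hp + t * z) + (norm (y - w))\<^sup>2 / 2)"
        by (rule order_trans[rotated])
      then have R: "lam * hp + (norm (p - w))\<^sup>2 / 2 \<le> lam * ((1 - t) * hp + t * z) + (norm (y - w))\<^sup>2 / 2"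
        by simp
      have yw: "y - w = (p - w) + t *\<^sub>R (u - p)" by (simp add: y_def algebra_simps)
      have "(norm (y - w))\<^sup>2 = (norm (p - w))\<^sup>2 + 2 * t * inner (p - w) (u - p) + t\<^sup>2 * (norm (u - p))\<^sup>2"
        unfolding yw by (rule norm_add_sq)
      with R have "t * (lam * hp) \<le> t * (lam * z + inner (p - w) (u - p) + t * C)"
        by (simp add: C_def algebra_simps power2_eq_square)
      then show ?thesis using t by simp
    qed
    have "lam * hp \<le> lam * z + inner (p - w) (u - p)"
      by (rule le_epsC[OF key]) (auto simp: C_def)
    then show ?thesis .
  qed
  then show ?thesis using hp by blast
qed



lemma step_ineq:
  fixes f :: "'a::euclidean_space \<Rightarrow> real"
  assumes S: "setting f g h L xs" and lam: "lam > 0" and ls: "LS f g h x lam"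
    and xp: "xp = x - lam *\<^sub>R grad_map g lam h x"
  shows "\<exists>hp. h xp = ereal hp \<and> (\<forall>u z. h u = ereal z \<longrightarrow>
           f xp + hp \<le> f u + z + ((norm (x - u))\<^sup>2 - (norm (xp - u))\<^sup>2) / (2 * lam))"
proof -
  have cvf: "convex_on UNIV f" and d: "\<And>x. (f has_derivative (\<lambda>v. inner (g x) v)) (at x)"
    and pr: "proper_fun h" and cl: "closed_fun h" and cv: "convex_fun h"
    using S unfolding setting_def by auto
  define w where "w = x - lam *\<^sub>R g x"
  define p where "p = prox lam h w"
  define G where "G = grad_map g lam h x"
  have lG: "lam *\<^sub>R G = x - p" using lam by (simp add: G_def grad_map_def w_def p_def)
  have pxp: "xp = p" using lG xp G_def by simp
  define dd where "dd = p - x"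
  obtain hp where hp: "h p = ereal hp" and opt: "\<And>u z. h u = ereal z \<Longrightarrow> lam * hp \<le> lam * z + inner (p - w) (u - p)"
    using prox_opt[OF pr cl cv lam, of p w] p_def by blast
  have mid: "p = (1 - 1/2) *\<^sub>R x + (1/2) *\<^sub>R (x - (2 * lam) *\<^sub>R G)"
  proof -
    have "(1/2) *\<^sub>R (x - (2 * lam) *\<^sub>R G) = (1/2) *\<^sub>R x - lam *\<^sub>R G" by (simp add: scaleR_right_diff_distrib)
    moreover have "(1 - 1/2) *\<^sub>R x + (1/2) *\<^sub>R x = x" by (simp flip: scaleR_add_left)
    ultimately have "(1 - 1/2) *\<^sub>R x + (1/2) *\<^sub>R (x - (2 * lam) *\<^sub>R G) = x - lam *\<^sub>R G" by (simp add: algebra_simps)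
    then show ?thesis using lG by simp
  qed
  have "f p \<le> (1 - 1/2) * f x + (1/2) * f (x - (2 * lam) *\<^sub>R G)"
    unfolding mid by (rule convex_onD[OF cvf]) auto
  moreover have "f (x - (2 * lam) *\<^sub>R G) \<le> f p - lam * inner G (g x) + lam / 2 * (norm G)\<^sup>2"
    using ls lG unfolding LS_def Let_def G_def[symmetric] by simp
  ultimately have dec0: "f p \<le> f x - lam * inner G (g x) + lam / 2 * (norm G)\<^sup>2" by simp
  have e1: "lam * inner G (g x) = - inner (g x) dd"
    using lG by (simp add: dd_def inner_commute inner_diff_right flip: inner_scaleR_left)
  have "norm dd = norm (lam *\<^sub>R G)" using lG by (simp add: dd_def norm_minus_commute)
  then have "norm dd = lam * norm G" using lam by simp
  then have e2: "lam / 2 * (norm G)\<^sup>2 = (norm dd)\<^sup>2 / (2 * lam)"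
    using lam by (simp add: power2_eq_square field_simps)
  have dec: "f p \<le> f x + inner (g x) dd + (norm dd)\<^sup>2 / (2 * lam)"
    using dec0 e1 e2 by simp
  have "f p + hp \<le> f u + z + ((norm (x - u))\<^sup>2 - (norm (p - u))\<^sup>2) / (2 * lam)"
    if hu: "h u = ereal z" for u z
  proof -
    have c2: "f x + inner (g x) (u - x) \<le> f u" by (rule grad_ineq[OF cvf d])
    have c3: "lam * hp \<le> lam * z + inner (p - w) (u - p)" by (rule opt[OF hu])
    have pw: "inner (p - w) (u - p) = inner dd (u - p) + lam * inner (g x) (u - p)"
      by (simp add: w_def dd_def inner_diff_left inner_diff_right algebra_simps)
    have c3': "hp \<le> z + inner dd (u - p) / lam + inner (g x) (u - p)"
      using c3 lam unfolding pw by (simp add: field_simps)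
    have ginn: "inner (g x) dd - inner (g x) (u - x) + inner (g x) (u - p) = 0"
      by (simp add: dd_def inner_diff_right)
    have xu: "x - u = (p - u) + (-1) *\<^sub>R dd" by (simp add: dd_def)
    have nrm: "(norm (x - u))\<^sup>2 - (norm (p - u))\<^sup>2 = (norm dd)\<^sup>2 + 2 * inner dd (u - p)"
      unfolding xu norm_add_sq by (simp add: inner_diff_left inner_diff_right inner_commute)
    have "((norm (x - u))\<^sup>2 - (norm (p - u))\<^sup>2) / (2 * lam) = (norm dd)\<^sup>2 / (2 * lam) + inner dd (u - p) / lam"
      unfolding nrm using lam by (simp add: field_simps)
    then show ?thesis using dec c2 c3' ginn by linarith
  qed
  then show ?thesis using hp pxp by blast
qed



lemma rate:
  fixes f :: "'a::euclidean_space \<Rightarrow> real"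
  assumes S: "setting f g h L xs" and L: "L > 0" and it: "ls_iterates f g h x0 x lam"
    and lamlb: "\<And>k. lam k \<ge> 1 / (3 * L)" and k: "k \<ge> 1"
  shows "(ereal (f (x k)) + h (x k)) - (ereal (f xs) + h xs) \<le> ereal (3 * L * (norm (x0 - xs))\<^sup>2 / 2 / real k)"
proof -
  have pr: "proper_fun h" and minim: "\<And>y. ereal (f xs) + h xs \<le> ereal (f y) + h y"
    using S unfolding setting_def by auto
  have x0: "x 0 = x0" and lpos: "\<And>j. lam j > 0" and lsj: "\<And>j. LS f g h (x j) (lam j)"
    and xs_def: "\<And>j. x (Suc j) = x j - lam j *\<^sub>R grad_map g (lam j) h (x j)"
    using it unfolding ls_iterates_def by auto
  have st: "\<exists>hp. h (x (Suc j)) = ereal hp \<and> (\<forall>u z. h u = ereal z \<longrightarrow>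
           f (x (Suc j)) + hp \<le> f u + z + ((norm (x j - u))\<^sup>2 - (norm (x (Suc j) - u))\<^sup>2) / (2 * lam j))" for j
    by (rule step_ineq[OF S lpos lsj xs_def])
  define hv where "hv j = real_of_ereal (h (x j))" for j
  have hv: "h (x (Suc j)) = ereal (hv (Suc j))" for j
  proof -
    obtain hp where "h (x (Suc j)) = ereal hp" using st[of j] by blast
    then show ?thesis unfolding hv_def by simp
  qed
  have stp: "f (x (Suc j)) + hv (Suc j) \<le> f u + z + ((norm (x j - u))\<^sup>2 - (norm (x (Suc j) - u))\<^sup>2) / (2 * lam j)"
    if hu: "h u = ereal z" for j u z
  proof -
    obtain hp where hp: "h (x (Suc j)) = ereal hp" and I: "\<And>u z. h u = ereal z \<Longrightarrow>
           f (x (Suc j)) + hp \<le> f u + z + ((norm (x j - u))\<^sup>2 - (norm (x (Suc j) - u))\<^sup>2) / (2 * lam j)"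
      using st[of j] by blast
    have "hp = hv (Suc j)" using hp hv[of j] by simp
    then show ?thesis using I[OF hu] by simp
  qed
  define Fv where "Fv j = f (x j) + hv j" for j
  obtain hs where hs: "h xs = ereal hs"
  proof (cases "h xs")
    case (real r) then show ?thesis using that by blast
  next
    case PInf
    have "ereal (f xs) + h xs \<le> ereal (f (x 1)) + h (x 1)" by (rule minim)
    then show ?thesis using PInf hv[of 0] by simp
  next
    case MInf then show ?thesis using pr unfolding proper_fun_def by auto
  qed
  define Fs where "Fs = f xs + hs"
  have Fsle: "Fs \<le> Fv (Suc j)" for j
    using minim[of "x (Suc j)"] hs hv[of j] unfolding Fs_def Fv_def by simp
  have key: "Fv (Suc j) \<le> Fs + ((norm (x j - xs))\<^sup>2 - (norm (x (Suc j) - xs))\<^sup>2) / (2 * lam j)" for j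
    using stp[OF hs, of j] unfolding Fv_def Fs_def by simp
  have mono1: "Fv (Suc (Suc m)) \<le> Fv (Suc m)" for m
  proof -
    have "Fv (Suc (Suc m)) \<le> Fv (Suc m) + ((norm (x (Suc m) - x (Suc m)))\<^sup>2 - (norm (x (Suc (Suc m)) - x (Suc m)))\<^sup>2) / (2 * lam (Suc m))"
      using stp[OF hv[of m], of "Suc m"] unfolding Fv_def by simp
    moreover have "((norm (x (Suc m) - x (Suc m)))\<^sup>2 - (norm (x (Suc (Suc m)) - x (Suc m)))\<^sup>2) / (2 * lam (Suc m)) \<le> 0"
      using lpos[of "Suc m"] by (simp add: divide_nonpos_pos)
    ultimately show ?thesis by simp
  qed
  have monon: "Fv (Suc (m + n)) \<le> Fv (Suc m)" for m n
  proof (induction n)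
    case 0 then show ?case by simp
  next
    case (Suc n) then show ?case using mono1[of "m + n"] by simp
  qed
  define r where "r j = (norm (x j - xs))\<^sup>2" for j
  define c where "c = 1 / (3 * L)"
  have cpos: "c > 0" using L by (simp add: c_def)
  have tm1: "c * (Fv k - Fs) \<le> lam j * (Fv (Suc j) - Fs)" if j: "j < k" for j
  proof -
    have "Fv k \<le> Fv (Suc j)" using monon[of j "k - Suc j"] j by simp
    then have "c * (Fv k - Fs) \<le> c * (Fv (Suc j) - Fs)" using cpos by simp
    also have "\<dots> \<le> lam j * (Fv (Suc j) - Fs)"
      using lamlb[of j] Fsle[of j] unfolding c_def by (intro mult_right_mono) auto
    finally show ?thesis .
  qed
  have tm2: "lam j * (Fv (Suc j) - Fs) \<le> (r j - r (Suc j)) / 2" for j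
  proof -
    have "Fv (Suc j) - Fs \<le> (r j - r (Suc j)) / (2 * lam j)" using key[of j] unfolding r_def by simp
    then have "lam j * (Fv (Suc j) - Fs) \<le> lam j * ((r j - r (Suc j)) / (2 * lam j))"
      using lpos[of j] by (intro mult_left_mono) auto
    then show ?thesis using lpos[of j] by simp
  qed
  have "(\<Sum>j<k. c * (Fv k - Fs)) \<le> (\<Sum>j<k. (r j - r (Suc j)) / 2)"
  proof (rule sum_mono)
    fix j assume "j \<in> {..<k}"
    then have "c * (Fv k - Fs) \<le> lam j * (Fv (Suc j) - Fs)" using tm1 by simp
    also have "\<dots> \<le> (r j - r (Suc j)) / 2" by (rule tm2)
    finally show "c * (Fv k - Fs) \<le> (r j - r (Suc j)) / 2" .
  qed
  also have "(\<Sum>j<k. (r j - r (Suc j)) / 2) = (r 0 - r k) / 2"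
    using sum_lessThan_telescope'[of r k] by (simp add: sum_divide_distrib[symmetric])
  also have "\<dots> \<le> r 0 / 2" by (simp add: r_def)
  finally have "real k * c * (Fv k - Fs) \<le> r 0 / 2" by simp
  then have "Fv k - Fs \<le> 3 * L * r 0 / 2 / real k"
    using k L by (simp add: c_def field_simps)
  moreover obtain k' where k': "k = Suc k'" using k by (cases k) auto
  ultimately show ?thesis using hv[of k'] hs x0 unfolding Fv_def Fs_def r_def
    by simp
qed


theorem theorem2p2:
  fixes L :: real and x0 xs :: "'a::euclidean_space"
  assumes "L > 0"
  shows "(\<forall>f gradf h. setting f gradf h L xs \<longrightarrow> (\<forall>x. LS f gradf h x (1 / (3 * L))))
       \<and> (\<forall>f gradf h x lam. setting f gradf h L xs \<and> ls_iterates f gradf h x0 x lam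
             \<longrightarrow> (\<forall>k. lam k \<ge> 1 / (3 * L)))
       \<and> (\<exists>D::real. \<forall>f gradf h x lam. setting f gradf h L xs \<and> ls_iterates f gradf h x0 x lam
             \<longrightarrow> (\<forall>k\<ge>1. (ereal (f (x k)) + h (x k)) - (ereal (f xs) + h xs) \<le> ereal (D / real k)))"
proof -
  have pa: "LS f gradf h x (1 / (3 * L))" if "setting f gradf h L xs" for f gradf h x
    by (rule part_a[OF _ _ assms]) (use that in \<open>auto simp: setting_def\<close>)
  have pb: "lam k \<ge> 1 / (3 * L)" if "setting f gradf h L xs" "ls_iterates f gradf h x0 x lam" for f gradf h x lam k
  proof -
    have "\<forall>\<mu>>0. LS f gradf h (x k) \<mu> \<longrightarrow> \<mu> \<le> lam k" using that(2) unfolding ls_iterates_def by blast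
    moreover have "(1 / (3 * L)) > 0" using assms by simp
    ultimately show ?thesis using pa[OF that(1)] by blast
  qed
  show ?thesis
  proof (intro conjI)
    show "\<forall>f gradf h. setting f gradf h L xs \<longrightarrow> (\<forall>x. LS f gradf h x (1 / (3 * L)))" using pa by blast
    show "\<forall>f gradf h x lam. setting f gradf h L xs \<and> ls_iterates f gradf h x0 x lam
             \<longrightarrow> (\<forall>k. lam k \<ge> 1 / (3 * L))" using pb by blast
    show "\<exists>D::real. \<forall>f gradf h x lam. setting f gradf h L xs \<and> ls_iterates f gradf h x0 x lam
             \<longrightarrow> (\<forall>k\<ge>1. (ereal (f (x k)) + h (x k)) - (ereal (f xs) + h xs) \<le> ereal (D / real k))"
    proof (intro exI allI impI)
      fix f gradf h x lam k
      assume H: "setting f gradf h L xs \<and> ls_iterates f gradf h x0 x lam" and k: "(1::nat) \<le> k"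
      show "(ereal (f (x k)) + h (x k)) - (ereal (f xs) + h xs) \<le> ereal (3 * L * (norm (x0 - xs))\<^sup>2 / 2 / real k)"
        by (rule rate[OF _ assms _ pb k]) (use H in auto)
    qed
  qed
qed

end
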